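(* Let $\Gamma$ be a distance-regular graph with valency $k$ and diameter $3$. Then the second largest eigenvalue $\theta_1$ of $\Gamma$ satisfies $$\theta_1\geq \min\left\{\frac{a_1+\sqrt{a_1^2+4k}}{2},\ a_3\right\}.$$
   Context: A connected graph $\Gamma$ of diameter $D$ is distance-regular if there are integers $b_i,c_i$ ($0\le i\le D$) such that for any two vertices $x,y$ at distance $i$, exactly $c_i$ neighbours of $y$ are at distance $i-1$ from $x$ and exactly $b_i$ neighbours of $y$ are at distance $i+1$ from $x$. Then $\Gamma$ is regular of valency $k=b_0$, and $a_i:=k-b_i-c_i$. The eigenvalues of $\Gamma$ are those of its adjacency matrix; $\Gamma$ has exactly $D+1$ distinct eigenvalues $k=\theta_0>\theta_1>\dots>\theta_D$. *)

theory Defs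
  imports "HOL-Analysis.Analysis"
begin

definition simple_graph :: "('a \<Rightarrow> 'a \<Rightarrow> bool) \<Rightarrow> bool" where
  "simple_graph E \<longleftrightarrow> (\<forall>x y. E x y \<longrightarrow> E y x) \<and> (\<forall>x. \<not> E x x)"

definition connected_graph :: "('a \<Rightarrow> 'a \<Rightarrow> bool) \<Rightarrow> bool" where
  "connected_graph E \<longleftrightarrow> (\<forall>x y. \<exists>n. (E ^^ n) x y)"

definition gdist :: "('a \<Rightarrow> 'a \<Rightarrow> bool) \<Rightarrow> 'a \<Rightarrow> 'a \<Rightarrow> nat" where
  "gdist E x y = (LEAST n. (E ^^ n) x y)"

definition diameter :: "('a::finite \<Rightarrow> 'a \<Rightarrow> bool) \<Rightarrow> nat" where
  "diameter E = Max {gdist E x y | x y. True}"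

definition distance_regular ::
  "('a::finite \<Rightarrow> 'a \<Rightarrow> bool) \<Rightarrow> (nat \<Rightarrow> nat) \<Rightarrow> (nat \<Rightarrow> nat) \<Rightarrow> bool" where
  "distance_regular E b c \<longleftrightarrow> simple_graph E \<and> connected_graph E \<and>
     (\<forall>x y. let i = gdist E x y in
        (i \<ge> 1 \<longrightarrow> card {z. E y z \<and> gdist E x z + 1 = i} = c i) \<and>
        card {z. E y z \<and> gdist E x z = i + 1} = b i)"

definition adj_matrix :: "('a::finite \<Rightarrow> 'a \<Rightarrow> bool) \<Rightarrow> real^'a^'a" where
  "adj_matrix E = (\<chi> i j. if E i j then 1 else 0)"

definition eigenvalues :: "('a::finite \<Rightarrow> 'a \<Rightarrow> bool) \<Rightarrow> real set" where
  "eigenvalues E = {\<theta>. \<exists>v. v \<noteq> 0 \<and> adj_matrix E *v v = \<theta> *\<^sub>R v}"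

definition second_eigenvalue :: "('a::finite \<Rightarrow> 'a \<Rightarrow> bool) \<Rightarrow> real" where
  "second_eigenvalue E = Max (eigenvalues E - {Max (eigenvalues E)})"

end

theory Submission
  imports Defs
begin


lemma eig_indep:
  fixes A :: "real^'n^'n"
  assumes "finite T" "\<forall>t\<in>T. A *v ev t = t *\<^sub>R ev t \<and> ev t \<noteq> 0"
  shows "(\<Sum>t\<in>T. g t *\<^sub>R ev t) = 0 \<Longrightarrow> \<forall>t\<in>T. g t = 0"
  using assms
proof (induction T arbitrary: g rule: finite_induct)
  case empty
  then show ?case by simp
next
  case (insert m T)
  have s: "g m *\<^sub>R ev m + (\<Sum>t\<in>T. g t *\<^sub>R ev t) = 0"
    using insert by (simp add: sum.insert)
  have "A *v (g m *\<^sub>R ev m + (\<Sum>t\<in>T. g t *\<^sub>R ev t)) - m *\<^sub>R (g m *\<^sub>R ev m + (\<Sum>t\<in>T. g t *\<^sub>R ev t)) = 0"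
    using s by simp
  moreover have "A *v (\<Sum>t\<in>T. g t *\<^sub>R ev t) = (\<Sum>t\<in>T. (g t * t) *\<^sub>R ev t)"
  proof -
    have "A *v (\<Sum>t\<in>T. g t *\<^sub>R ev t) = (\<Sum>t\<in>T. A *v (g t *\<^sub>R ev t))"
      using linear_sum[OF matrix_vector_mul_linear[of A]] by simp
    also have "\<dots> = (\<Sum>t\<in>T. (g t * t) *\<^sub>R ev t)"
      using insert.prems by (intro sum.cong) (auto simp: matrix_vector_mult_scaleR)
    finally show ?thesis .
  qed
  ultimately have "(\<Sum>t\<in>T. (g t * t) *\<^sub>R ev t) - (\<Sum>t\<in>T. (m * g t) *\<^sub>R ev t) = 0"
    using insert.prems
    by (simp add: matrix_vector_right_distrib matrix_vector_mult_scaleR scaleR_sum_right algebra_simps)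
  hence "(\<Sum>t\<in>T. (g t * (t - m)) *\<^sub>R ev t) = 0"
    by (simp add: sum_subtractf[symmetric] algebra_simps)
  hence "\<forall>t\<in>T. g t * (t - m) = 0" using insert.IH[of "\<lambda>t. g t * (t - m)"] insert.prems by auto
  hence z: "\<forall>t\<in>T. g t = 0" using insert.hyps by auto
  hence "g m *\<^sub>R ev m = 0" using s by simp
  hence "g m = 0" using insert.prems by simp
  then show ?case using z by simp
qed

lemma eig_finite:
  fixes E :: "'a::finite \<Rightarrow> 'a \<Rightarrow> bool"
  shows "finite (eigenvalues E)"
proof -
  have "card T \<le> CARD('a)" if T: "T \<subseteq> eigenvalues E" "finite T" for T
  proof -
    have "\<forall>t\<in>T. \<exists>v. v \<noteq> 0 \<and> adj_matrix E *v v = t *\<^sub>R v" using T unfolding eigenvalues_def by auto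
    then obtain ev where ev: "\<forall>t\<in>T. adj_matrix E *v ev t = t *\<^sub>R ev t \<and> ev t \<noteq> 0" by metis
    have inj: "inj_on ev T"
    proof
      fix s t assume "s \<in> T" "t \<in> T" "ev s = ev t"
      then have "s *\<^sub>R ev s = t *\<^sub>R ev s" using ev by metis
      then show "s = t" using ev \<open>s \<in> T\<close> by simp
    qed
    have "independent (ev ` T)"
      unfolding independent_explicit
    proof (intro conjI allI impI)
      show "finite (ev ` T)" using T by simp
      fix c assume "(\<Sum>v\<in>ev ` T. c v *\<^sub>R v) = 0"
      hence "(\<Sum>t\<in>T. (c (ev t)) *\<^sub>R ev t) = 0" by (simp add: sum.reindex[OF inj])
      hence "\<forall>t\<in>T. c (ev t) = 0" using eig_indep[OF T(2) ev, of "\<lambda>t. c (ev t)"] by blast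
      thus "\<forall>v\<in>ev ` T. c v = 0" by auto
    qed
    hence "card (ev ` T) \<le> DIM(real^'a)" using independent_bound by blast
    thus ?thesis using card_image[OF inj] by simp
  qed
  thus ?thesis using finite_if_finite_subsets_card_bdd by blast
qed


lemma dr_simple: "distance_regular E b c \<Longrightarrow> simple_graph E"
  and dr_conn: "distance_regular E b c \<Longrightarrow> connected_graph E"
  by (auto simp: distance_regular_def)

lemma gd_walk: assumes "connected_graph E" shows "(E ^^ gdist E x y) x y"
proof -
  from assms obtain n where "(E ^^ n) x y" unfolding connected_graph_def by blast
  thus ?thesis unfolding gdist_def by (rule LeastI)
qed

lemma gd_le: "(E ^^ n) x y \<Longrightarrow> gdist E x y \<le> n"
  unfolding gdist_def by (rule Least_le)

lemma gd_refl: "gdist E x x = 0"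
  using gd_le[where n=0 and x=x and y=x and E=E] by simp

lemma gd_0: assumes "connected_graph E" "gdist E x y = 0" shows "x = y"
  using gd_walk[OF assms(1), of x y] assms(2) by simp

lemma gd_step: assumes "connected_graph E" "E y z" shows "gdist E x z \<le> gdist E x y + 1"
proof -
  have "(E ^^ Suc (gdist E x y)) x z" using gd_walk[OF assms(1)] assms(2) by (rule relpowp_Suc_I)
  thus ?thesis using gd_le by fastforce
qed

lemma gd_step2: assumes "connected_graph E" "simple_graph E" "E y z" shows "gdist E x y \<le> gdist E x z + 1"
  using gd_step[OF assms(1), of z y x] assms(2,3) unfolding simple_graph_def by blast

lemma gd_1: assumes "connected_graph E" "simple_graph E" shows "gdist E x z = 1 \<longleftrightarrow> E x z"
proof
  assume "gdist E x z = 1" thus "E x z" using gd_walk[OF assms(1), of x z] by (metis relpowp_1)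
next
  assume e: "E x z"
  have "gdist E x z \<le> 1" using gd_le[where n=1 and x=x and y=z and E=E] e by (metis relpowp_1)
  moreover have "gdist E x z \<noteq> 0" using gd_0[OF assms(1)] e assms(2) unfolding simple_graph_def by blast
  ultimately show "gdist E x z = 1" by simp
qed

lemma gd_bound: fixes E :: "'a::finite \<Rightarrow> 'a \<Rightarrow> bool"
  shows "gdist E x y \<le> diameter E"
  unfolding diameter_def
proof (rule Max_ge)
  have "{gdist E x y |x y. True} = (\<lambda>(x,y). gdist E x y) ` UNIV" by auto
  thus "finite {gdist E x y |x y. True}" by simp
qed auto

lemma gd_max: fixes E :: "'a::finite \<Rightarrow> 'a \<Rightarrow> bool"
  shows "\<exists>x y. gdist E x y = diameter E"
proof -
  have eq: "{gdist E x y |x y. True} = (\<lambda>(x,y). gdist E x y) ` UNIV" by auto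
  have "diameter E \<in> (\<lambda>(x,y). gdist E x y) ` UNIV"
    unfolding diameter_def eq by (rule Max_in) auto
  thus ?thesis by (auto, metis)
qed

lemma nb:
  fixes E :: "'a::finite \<Rightarrow> 'a \<Rightarrow> bool" and f :: "nat \<Rightarrow> real" and x y :: 'a
  assumes dr: "distance_regular E b c"
  defines "i \<equiv> gdist E x y"
  defines "C \<equiv> (if i \<ge> 1 then c i else 0)"
  defines "A0 \<equiv> card {z. E y z \<and> gdist E x z = i}"
  shows "b 0 = C + A0 + b i"
    and "(\<Sum>z\<in>{z. E y z}. f (gdist E x z)) = real C * f (i - 1) + real A0 * f i + real (b i) * f (i + 1)"
proof -
  have cn: "connected_graph E" and sg: "simple_graph E" using dr by (auto simp: distance_regular_def)
  define Sm where "Sm = {z. E y z \<and> gdist E x z + 1 = i}"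
  define S0 where "S0 = {z. E y z \<and> gdist E x z = i}"
  define Sp where "Sp = {z. E y z \<and> gdist E x z = i + 1}"
  have cm: "card Sm = C"
  proof (cases "i \<ge> 1")
    case True thus ?thesis using dr unfolding distance_regular_def Sm_def C_def i_def Let_def by auto
  next
    case False thus ?thesis unfolding Sm_def C_def by auto
  qed
  have cp: "card Sp = b i" using dr unfolding distance_regular_def Sp_def i_def Let_def by auto
  have N: "{z. E y z} = Sm \<union> S0 \<union> Sp"
  proof -
    have "E y z \<Longrightarrow> gdist E x z + 1 = i \<or> gdist E x z = i \<or> gdist E x z = i + 1" for z
      using gd_step[OF cn, of y z x] gd_step2[OF cn sg, of y z x] unfolding i_def by linarith
    thus ?thesis unfolding Sm_def S0_def Sp_def by auto
  qed
  have d1: "Sm \<inter> S0 = {}" "(Sm \<union> S0) \<inter> Sp = {}" unfolding Sm_def S0_def Sp_def by auto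
  have deg: "card {z. E y z} = b 0"
  proof -
    have "{z. E y z} = {z. E y z \<and> gdist E y z = 0 + 1}" using gd_1[OF cn sg, of y] by auto
    thus ?thesis using dr gd_refl[of E y] unfolding distance_regular_def Let_def by metis
  qed
  have "card {z. E y z} = card Sm + card S0 + card Sp"
    unfolding N by (simp add: card_Un_disjoint d1)
  thus "b 0 = C + A0 + b i" using deg cm cp unfolding A0_def S0_def by simp
  have "(\<Sum>z\<in>{z. E y z}. f (gdist E x z)) = (\<Sum>z\<in>Sm. f (gdist E x z)) + (\<Sum>z\<in>S0. f (gdist E x z)) + (\<Sum>z\<in>Sp. f (gdist E x z))"
    unfolding N by (simp add: sum.union_disjoint d1)
  also have "(\<Sum>z\<in>Sm. f (gdist E x z)) = (\<Sum>z\<in>Sm. f (i - 1))"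
    by (rule sum.cong) (auto simp: Sm_def)
  also have "(\<Sum>z\<in>S0. f (gdist E x z)) = (\<Sum>z\<in>S0. f i)"
    by (rule sum.cong) (auto simp: S0_def)
  also have "(\<Sum>z\<in>Sp. f (gdist E x z)) = (\<Sum>z\<in>Sp. f (i + 1))"
    by (rule sum.cong) (auto simp: Sp_def)
  finally show "(\<Sum>z\<in>{z. E y z}. f (gdist E x z)) = real C * f (i - 1) + real A0 * f i + real (b i) * f (i + 1)"
    using cm cp unfolding A0_def S0_def by simp
qed

lemma adj_mult: "(adj_matrix E *v v) $ y = (\<Sum>z\<in>{z. E y z}. v $ z)"
proof -
  have "(adj_matrix E *v v) $ y = (\<Sum>j\<in>UNIV. (if E y j then 1 else 0) * v $ j)"
    by (simp add: adj_matrix_def matrix_vector_mult_def)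
  also have "(\<Sum>j\<in>UNIV. (if E y j then 1 else 0) * v $ j) = (\<Sum>j\<in>UNIV. if E y j then v $ j else 0)"
    by (rule sum.cong) auto
  also have "\<dots> = (\<Sum>z\<in>{z. E y z}. v $ z)" by (simp add: sum.inter_filter[symmetric])
  finally show ?thesis .
qed



lemma alg:
  fixes k b1 b2 c2 c3 :: real
  assumes k: "k > 0" and b1: "b1 > 0" and b2: "b2 > 0" and c2: "c2 \<ge> 0" and c3: "c3 \<ge> 0" "c3 \<le> k"
  defines "a1 \<equiv> k - b1 - 1" and "a2 \<equiv> k - b2 - c2" and "a3 \<equiv> k - c3"
  defines "P2 \<equiv> \<lambda>t. t * t - a1 * t - k"
  defines "P3 \<equiv> \<lambda>t. (t - a2) * P2 t - b1 * c2 * t"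
  defines "F \<equiv> \<lambda>t. c3 * b2 * P2 t + (a3 - t) * P3 t"
  shows "\<exists>t. F t = 0 \<and> t \<noteq> k \<and> t \<ge> min ((a1 + sqrt (a1\<^sup>2 + 4 * k)) / 2) a3"
proof -
  define sq where "sq = sqrt (a1\<^sup>2 + 4 * k)"
  define s where "s = (a1 + sq) / 2"
  define s' where "s' = (a1 - sq) / 2"
  have sq2: "sq * sq = a1\<^sup>2 + 4 * k" unfolding sq_def using k
    by (simp add: add_nonneg_nonneg)
  have sqa: "sq \<ge> \<bar>a1\<bar>" unfolding sq_def using k
    by (metis less_eq_real_def mult_nonneg_nonneg real_sqrt_abs real_sqrt_le_mono zero_le_numeral le_add_same_cancel1)
  have fac: "P2 t = (t - s) * (t - s')" for t
    unfolding P2_def s_def s'_def using sq2 by (simp add: field_simps power2_eq_square)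
  have s0: "s \<ge> 0" unfolding s_def using sqa by simp
  have s'0: "s' \<le> 0" unfolding s'_def using sqa by simp
  have P2k: "P2 k = k * b1" unfolding P2_def a1_def by (simp add: algebra_simps)
  have sk: "s < k"
  proof (rule ccontr)
    assume "\<not> s < k"
    hence "(k - s) * (k - s') \<le> 0" using s'0 k by (intro mult_nonpos_nonneg) auto
    moreover have "k * b1 > 0" using k b1 by simp
    ultimately show False using fac[of k] P2k by linarith
  qed
  define m where "m = min s a3"
  have mk: "m < k" using sk unfolding m_def by simp
  have Fm: "F m \<le> 0"
  proof (cases "s \<le> a3")
    case True
    hence "m = s" unfolding m_def by simp
    moreover have "P2 s = 0" using fac by simp
    ultimately have "F m = (a3 - s) * (- (b1 * c2 * s))" unfolding F_def P3_def by simp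
    moreover have "b1 * c2 * s \<ge> 0" using b1 c2 s0 by simp
    ultimately show ?thesis using True by (simp add: mult_nonneg_nonneg)
  next
    case False
    hence "m = a3" unfolding m_def by simp
    hence "F m = c3 * b2 * P2 a3" unfolding F_def by simp
    moreover have "P2 a3 \<le> 0"
    proof -
      have "a3 - s \<le> 0" using False by simp
      moreover have "a3 - s' \<ge> 0" using s'0 c3 unfolding a3_def by simp
      ultimately have "(a3 - s) * (a3 - s') \<le> 0" by (rule mult_nonpos_nonneg)
      thus ?thesis using fac[of a3] by simp
    qed
    ultimately show ?thesis using c3 b2 by (simp add: mult_nonneg_nonpos)
  qed
  define H where "H = (\<lambda>t. k * b1 * b2 - c3 * b2 * (t + b1 + 1) - (a3 - t) * (P2 t + (b2 + c2) * (t + b1 + 1) - b1 * c2))"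
  have FH: "F t = (k - t) * H t" for t
    unfolding F_def H_def P3_def P2_def a1_def a2_def a3_def by (simp only: algebra_simps)
  have Hk: "H k = k * b1 * b2 + c3 * k * b1 + c3 * c2 * (k + 1)"
    unfolding H_def P2_def a1_def a3_def by (simp add: algebra_simps)
  have Hkp: "H k > 0" unfolding Hk using k b1 b2 c2 c3
    by (intro add_pos_nonneg mult_pos_pos mult_nonneg_nonneg) auto
  have Hm: "H m \<le> 0" using Fm FH[of m] mk
    by (metis diff_gt_0_iff_gt mult_le_0_iff not_le)
  have "continuous_on {m..k} H" unfolding H_def P2_def by (intro continuous_intros)
  then obtain t where t: "t \<ge> m" "t \<le> k" "H t = 0"
    using IVT'[of H m 0 k] Hm Hkp mk by auto
  have "t \<noteq> k" using t Hkp by auto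
  moreover have "F t = 0" using FH t by simp
  ultimately show ?thesis using t(1) unfolding m_def s_def sq_def by auto
qed


theorem lemma6:
  fixes E :: "'a::finite \<Rightarrow> 'a \<Rightarrow> bool" and b c :: "nat \<Rightarrow> nat"
  assumes "distance_regular E b c"
    and "diameter E = 3"
  defines "k \<equiv> real (b 0)"
    and "a1 \<equiv> real (b 0) - real (b 1) - real (c 1)"
    and "a3 \<equiv> real (b 0) - real (b 3) - real (c 3)"
  shows "second_eigenvalue E \<ge> min ((a1 + sqrt (a1\<^sup>2 + 4 * k)) / 2) a3"
proof -
  note dr = assms(1)
  have cn: "connected_graph E" and sg: "simple_graph E" using dr by (auto simp: distance_regular_def)
  have bnd: "gdist E x y \<le> 3" for x y using gd_bound[of E x y] assms(2) by simp
  obtain x0 x3 where d3: "gdist E x0 x3 = 3" using gd_max[of E] assms(2) by auto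
  have DRc: "card {z. E y z \<and> gdist E x z + 1 = i} = c i" if "gdist E x y = i" "i \<ge> 1" for x y i
    using dr that unfolding distance_regular_def Let_def by auto
  have DRb: "card {z. E y z \<and> gdist E x z = i + 1} = b i" if "gdist E x y = i" for x y i
    using dr that unfolding distance_regular_def Let_def by auto
  have "(E ^^ Suc (Suc (Suc 0))) x0 x3" using gd_walk[OF cn, of x0 x3] d3 by (simp add: numeral_3_eq_3)
  then obtain v2 where w2: "(E ^^ Suc (Suc 0)) x0 v2" and e3: "E v2 x3" by (rule relpowp_Suc_E)
  then obtain v1 where w1: "(E ^^ Suc 0) x0 v1" and e2: "E v1 v2" by (blast elim: relpowp_Suc_E)
  have e1: "E x0 v1" using w1 by (metis relpowp_Suc_0)
  have d1: "gdist E x0 v1 = 1" using gd_1[OF cn sg] e1 by simp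
  have d2: "gdist E x0 v2 = 2"
    using gd_step[OF cn e2, of x0] gd_step[OF cn e3, of x0] d1 d3 by simp
  have "v1 \<in> {z. E x0 z \<and> gdist E x0 z = 0 + 1}" using e1 d1 by simp
  hence b0: "b 0 > 0" using DRb[OF gd_refl[of E x0]] by (metis card_gt_0_iff empty_iff finite)
  have "v2 \<in> {z. E v1 z \<and> gdist E x0 z = 1 + 1}" using e2 d2 by simp
  hence b1: "b 1 > 0" using DRb[OF d1] by (metis card_gt_0_iff empty_iff finite)
  have "x3 \<in> {z. E v2 z \<and> gdist E x0 z = 2 + 1}" using e3 d3 by simp
  hence b2: "b 2 > 0" using DRb[OF d2] by (metis card_gt_0_iff empty_iff finite)
  have "{z. E v1 z \<and> gdist E x0 z + 1 = 1} = {x0}"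
    using gd_0[OF cn] gd_refl[of E x0] e1 sg unfolding simple_graph_def by auto
  hence c1: "c 1 = 1" using DRc[OF d1] by simp
  have n4: "gdist E x0 z \<noteq> 3 + 1" for z using bnd[of x0 z] by simp
  have "{z. E x3 z \<and> gdist E x0 z = 3 + 1} = {}" using n4 by blast
  hence b3: "b 3 = 0" using DRb[OF d3] by (metis card.empty)
  have c3le: "c 3 \<le> b 0" using nb(1)[OF dr, where x=x0 and y=x3] d3 b3 by simp
  define K where "K = real (b 0)"
  define B1 where "B1 = real (b 1)"
  define B2 where "B2 = real (b 2)"
  define C2 where "C2 = real (c 2)"
  define C3 where "C3 = real (c 3)"
  define A1 where "A1 = K - B1 - 1"
  define A2 where "A2 = K - B2 - C2"
  define A3 where "A3 = K - C3"
  define P2 where "P2 = (\<lambda>t. t * t - A1 * t - K)"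
  define P3 where "P3 = (\<lambda>t. (t - A2) * P2 t - B1 * C2 * t)"
  have a1e: "a1 = A1" unfolding a1_def A1_def K_def B1_def c1 by simp
  have a3e: "a3 = A3" unfolding a3_def A3_def K_def C3_def b3 by simp
  have ke: "k = K" unfolding k_def K_def ..
  obtain t where tF: "C3 * B2 * P2 t + (A3 - t) * P3 t = 0" and tk: "t \<noteq> K"
     and tm: "t \<ge> min ((A1 + sqrt (A1\<^sup>2 + 4 * K)) / 2) A3"
    using alg[of K B1 B2 C2 C3] b0 b1 b2 c3le unfolding P3_def P2_def A1_def A2_def A3_def K_def B1_def B2_def C2_def C3_def
    by auto
  define w where "w = (\<lambda>n::nat. if n = 0 then K * B1 * B2 else if n = 1 then t * B1 * B2
     else if n = 2 then P2 t * B2 else if n = 3 then P3 t else 0)"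
  define v :: "real^'a" where "v = (\<chi> y. w (gdist E x0 y))"
  have eig: "adj_matrix E *v v = t *\<^sub>R v"
  proof (subst vec_eq_iff, intro allI)
    fix y
    define i where "i = gdist E x0 y"
    define A0 where "A0 = card {z. E y z \<and> gdist E x0 z = i}"
    have deg: "b 0 = (if i \<ge> 1 then c i else 0) + A0 + b i" using nb(1)[OF dr, where x=x0 and y=y] unfolding i_def A0_def .
    have "(adj_matrix E *v v) $ y = (\<Sum>z\<in>{z. E y z}. w (gdist E x0 z))"
      unfolding adj_mult v_def by simp
    also have "\<dots> = real (if i \<ge> 1 then c i else 0) * w (i - 1) + real A0 * w i + real (b i) * w (i + 1)"
      using nb(2)[OF dr, where x=x0 and y=y and f=w] unfolding i_def A0_def .
    finally have S: "(adj_matrix E *v v) $ y = real (if i \<ge> 1 then c i else 0) * w (i - 1) + real A0 * w i + real (b i) * w (i + 1)" .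
    have "i \<le> 3" unfolding i_def using bnd .
    hence "i = 0 \<or> i = 1 \<or> i = 2 \<or> i = 3" by auto
    moreover {
      assume "i = 0"
      hence A0e: "real A0 = 0" using deg by simp
      have "(adj_matrix E *v v) $ y = K * (t * B1 * B2)" using S A0e \<open>i = 0\<close> unfolding w_def K_def by simp
      hence "(adj_matrix E *v v) $ y = (t *\<^sub>R v) $ y" unfolding v_def w_def using \<open>i = 0\<close> i_def by simp
    } moreover {
      assume "i = 1"
      hence A0e: "real A0 = K - 1 - B1" using deg c1 unfolding K_def B1_def by simp
      have "(adj_matrix E *v v) $ y = K * B1 * B2 + (K - 1 - B1) * (t * B1 * B2) + B1 * (P2 t * B2)"
        using S A0e \<open>i = 1\<close> c1 unfolding w_def B1_def by simp
      also have "\<dots> = t * (t * B1 * B2)" unfolding P2_def A1_def by (simp add: algebra_simps)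
      finally have "(adj_matrix E *v v) $ y = (t *\<^sub>R v) $ y" unfolding v_def w_def using \<open>i = 1\<close> i_def by simp
    } moreover {
      assume "i = 2"
      hence A0e: "real A0 = K - C2 - B2" using deg unfolding K_def B2_def C2_def by simp
      have "(adj_matrix E *v v) $ y = C2 * (t * B1 * B2) + (K - C2 - B2) * (P2 t * B2) + B2 * P3 t"
        using S A0e \<open>i = 2\<close> unfolding w_def B2_def C2_def by simp
      also have "\<dots> = t * (P2 t * B2)" unfolding P3_def A2_def by (simp add: algebra_simps)
      finally have "(adj_matrix E *v v) $ y = (t *\<^sub>R v) $ y" unfolding v_def w_def using \<open>i = 2\<close> i_def by simp
    } moreover {
      assume "i = 3"
      hence A0e: "real A0 = K - C3" using deg b3 unfolding K_def C3_def by simp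
      have "(adj_matrix E *v v) $ y = C3 * (P2 t * B2) + (K - C3) * P3 t"
        using S A0e \<open>i = 3\<close> b3 unfolding w_def C3_def by simp
      also have "\<dots> = t * P3 t" using tF unfolding A3_def by (simp add: algebra_simps)
      finally have "(adj_matrix E *v v) $ y = (t *\<^sub>R v) $ y" unfolding v_def w_def using \<open>i = 3\<close> i_def by simp
    }
    ultimately show "(adj_matrix E *v v) $ y = (t *\<^sub>R v) $ y" by blast
  qed
  have "v $ x0 = K * B1 * B2" unfolding v_def w_def by (simp add: gd_refl)
  hence "v \<noteq> 0" using b0 b1 b2 unfolding K_def B1_def B2_def by auto
  hence tE: "t \<in> eigenvalues E" using eig unfolding eigenvalues_def by auto
  have kE: "K \<in> eigenvalues E"
  proof -
    have "adj_matrix E *v (1::real^'a) = K *\<^sub>R 1"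
    proof (subst vec_eq_iff, intro allI)
      fix y
      have "(adj_matrix E *v (1::real^'a)) $ y = real (card {z. E y z})" unfolding adj_mult by simp
      also have "card {z. E y z} = b 0"
        using nb(1)[OF dr, where x=y and y=y] nb(2)[OF dr, where x=y and y=y and f="\<lambda>_. 1"] by simp
      finally show "(adj_matrix E *v (1::real^'a)) $ y = (K *\<^sub>R (1::real^'a)) $ y" unfolding K_def by simp
    qed
    moreover have "(1::real^'a) \<noteq> 0" by (simp add: vec_eq_iff)
    ultimately show ?thesis unfolding eigenvalues_def by blast
  qed
  have kmax: "e \<le> K" if eE: "e \<in> eigenvalues E" for e
  proof -
    obtain u where u0: "u \<noteq> 0" and ue: "adj_matrix E *v u = e *\<^sub>R u" using eE unfolding eigenvalues_def by auto
    have "Max (range (\<lambda>z. \<bar>u $ z\<bar>)) \<in> range (\<lambda>z. \<bar>u $ z\<bar>)" by (rule Max_in) auto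
    then obtain y where y: "Max (range (\<lambda>z. \<bar>u $ z\<bar>)) = \<bar>u $ y\<bar>" by (metis rangeE)
    have ymax: "\<bar>u $ z\<bar> \<le> \<bar>u $ y\<bar>" for z unfolding y[symmetric] by (rule Max_ge) auto
    obtain z0 where "u $ z0 \<noteq> 0" using u0 by (auto simp: vec_eq_iff)
    hence upos: "\<bar>u $ y\<bar> > 0" using ymax[of z0] by linarith
    have "e * u $ y = (\<Sum>z\<in>{z. E y z}. u $ z)" using ue adj_mult[of E u y] by (simp add: vec_eq_iff)
    hence "\<bar>e\<bar> * \<bar>u $ y\<bar> = \<bar>\<Sum>z\<in>{z. E y z}. u $ z\<bar>" by (metis abs_mult)
    also have "\<dots> \<le> (\<Sum>z\<in>{z. E y z}. \<bar>u $ z\<bar>)" by (rule sum_abs)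
    also have "\<dots> \<le> of_nat (card {z. E y z}) * \<bar>u $ y\<bar>" by (rule sum_bounded_above) (rule ymax)
    also have "card {z. E y z} = b 0"
      using nb(1)[OF dr, where x=y and y=y] nb(2)[OF dr, where x=y and y=y and f="\<lambda>_. 1"] by simp
    finally have "\<bar>e\<bar> * \<bar>u $ y\<bar> \<le> K * \<bar>u $ y\<bar>" unfolding K_def by simp
    hence "\<bar>e\<bar> \<le> K" using upos by simp
    thus ?thesis by simp
  qed
  have fin: "finite (eigenvalues E)" by (rule eig_finite)
  have MK: "Max (eigenvalues E) = K" using kE kmax fin by (intro Max_eqI) auto
  have "t \<le> second_eigenvalue E" unfolding second_eigenvalue_def MK
    using tE tk fin by (intro Max_ge) auto
  thus ?thesis using tm unfolding a1e a3e ke by linarith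
qed
end
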